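(* Let $\rho$ be a ray and let $h_0=|\rho|$. Fix one side of $\rho$ (counterclockwise or clockwise), let $\gamma$ be the neighbor of $\rho$ on that side in $\Sigma_{h_0}$, and set $w_s=u_\gamma+s\,u_\rho$ for integers $s\ge 0$. Then for every $h\ge h_0$, a ray $\nu$ is the neighbor of $\rho$ on that side in $\Sigma_h$ if and only if $u_\nu=w_a$ for some $a\ge 0$ such that $|w_a|\le h$ and $|w_s|>h$ for all $s>a$.
   Context: A ray is a half-line $\rho=\mathbb{R}_{\ge 0}v\subset\mathbb{R}^2$ with $v\in\mathbb{Z}^2\setminus\{0\}$; $u_\rho$ is its primitive lattice generator. On $\mathbb{Z}^2$ use the norm $|(x,y)|=\max\{|x|,|y|\}$, and $|\rho|=|u_\rho|$. $\Sigma_h$ is the complete fan whose rays are all rays $\rho$ with $|\rho|\le h$ and whose $2$-dimensional cones are spanned by angularly consecutive such rays. The neighbors of $\rho\in\Sigma_h(1)$ are the two rays of $\Sigma_h$ adjacent to $\rho$ in angular order. *)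

theory Defs
  imports "HOL-Analysis.Analysis"
begin

text \<open>A ray is identified with its primitive lattice generator u in Z^2.\<close>

type_synonym lvec = "int \<times> int"

definition primitive :: "lvec \<Rightarrow> bool" where
  "primitive v \<longleftrightarrow> v \<noteq> (0,0) \<and> gcd (fst v) (snd v) = 1"

definition maxnorm :: "lvec \<Rightarrow> int" where
  "maxnorm v = max \<bar>fst v\<bar> \<bar>snd v\<bar>"

definition to_complex :: "lvec \<Rightarrow> complex" where
  "to_complex v = Complex (of_int (fst v)) (of_int (snd v))"

definition ccw_angle :: "lvec \<Rightarrow> lvec \<Rightarrow> real" where
  "ccw_angle u v = (let t = Arg (to_complex v / to_complex u) in if t < 0 then t + 2 * pi else t)"

definition side_angle :: "bool \<Rightarrow> lvec \<Rightarrow> lvec \<Rightarrow> real" where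
  "side_angle ccw u v = (if ccw then ccw_angle u v else ccw_angle v u)"

definition fan_rays :: "int \<Rightarrow> lvec set" where
  "fan_rays h = {u. primitive u \<and> maxnorm u \<le> h}"

definition fan_neighbor :: "bool \<Rightarrow> int \<Rightarrow> lvec \<Rightarrow> lvec \<Rightarrow> bool" where
  "fan_neighbor ccw h rho nu \<longleftrightarrow>
     rho \<in> fan_rays h \<and> nu \<in> fan_rays h \<and> nu \<noteq> rho \<and>
     \<not> (\<exists>w \<in> fan_rays h. 0 < side_angle ccw rho w \<and> side_angle ccw rho w < side_angle ccw rho nu)"

end

theory Submission
  imports Defs
begin

definition D :: "lvec \<Rightarrow> lvec \<Rightarrow> int" where
  "D u v = fst u * snd v - snd u * fst v"

lemma to_complex_eq0: "to_complex u = 0 \<longleftrightarrow> u = (0,0)"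
  by (cases u) (auto simp: to_complex_def complex_eq_iff)

lemma Im_quot:
  shows "Im (to_complex v / to_complex u) = of_int (D u v) / ((of_int (fst u))^2 + (of_int (snd u))^2)"
  by (simp add: to_complex_def Im_divide D_def algebra_simps)

lemma Re_quot:
  shows "Re (to_complex v / to_complex u) = of_int (fst u * fst v + snd u * snd v) / ((of_int (fst u))^2 + (of_int (snd u))^2)"
  by (simp add: to_complex_def Re_divide algebra_simps)

lemma sq_pos: "u \<noteq> (0,0) \<Longrightarrow> (0::real) < (of_int (fst u))^2 + (of_int (snd u))^2"
  by (cases u) (auto simp: sum_power2_gt_zero_iff)

lemma ccw_angle_nonneg: "0 \<le> ccw_angle u v"
  using mpi_less_Arg[of "to_complex v / to_complex u"] by (auto simp: ccw_angle_def Let_def)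

lemma L1: assumes "u \<noteq> (0,0)"
  shows "(0 < ccw_angle u v \<and> ccw_angle u v < pi) \<longleftrightarrow> D u v > 0"
proof -
  define z where "z = to_complex v / to_complex u"
  have im: "Im z > 0 \<longleftrightarrow> D u v > 0" using Im_quot[of v u] sq_pos[OF assms]
    by (simp add: z_def zero_less_divide_iff)
  have "ccw_angle u v = (if Arg z < 0 then Arg z + 2*pi else Arg z)" by (simp add: ccw_angle_def z_def Let_def)
  then show ?thesis using im Arg_lt_pi[of z] mpi_less_Arg[of z] by auto
qed

lemma L4: assumes "u \<noteq> (0,0)" "D u v1 > 0" "D u v2 > 0" "D v1 v2 > 0"
  shows "ccw_angle u v1 < ccw_angle u v2"
proof -
  have v1: "v1 \<noteq> (0,0)" using assms(2) by (auto simp: D_def)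
  define z1 where "z1 = to_complex v1 / to_complex u"
  define z2 where "z2 = to_complex v2 / to_complex u"
  define q where "q = to_complex v2 / to_complex v1"
  have i1: "Im z1 > 0" using Im_quot[of v1 u] sq_pos[OF assms(1)] assms(2)
    by (simp add: z1_def zero_less_divide_iff)
  have i2: "Im z2 > 0" using Im_quot[of v2 u] sq_pos[OF assms(1)] assms(3)
    by (simp add: z2_def zero_less_divide_iff)
  have iq: "Im q > 0" using Im_quot[of v2 v1] sq_pos[OF v1] assms(4)
    by (simp add: q_def zero_less_divide_iff)
  have a1: "ccw_angle u v1 = Arg z1" using i1 Arg_lt_pi[of z1] by (simp add: ccw_angle_def z1_def Let_def)
  have a2: "ccw_angle u v2 = Arg z2" using i2 Arg_lt_pi[of z2] by (simp add: ccw_angle_def z2_def Let_def)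
  have z2eq: "z2 = z1 * q" using v1 to_complex_eq0[of v1] by (simp add: z1_def z2_def q_def)
  have nz: "z1 \<noteq> 0" "q \<noteq> 0" using i1 iq by auto
  have e: "Arg z2 = Arg z1 + Arg q + (if Arg z1 + Arg q \<in> {-pi<..pi} then 0 else if Arg z1 + Arg q > pi then -2*pi else 2*pi)"
    using Arg_times'[OF nz] z2eq by simp
  show ?thesis using e a1 a2 Arg_lt_pi[of z1] Arg_lt_pi[of q] Arg_lt_pi[of z2] i1 i2 iq
    by (auto split: if_splits)
qed

lemma D_zero_mult: assumes "primitive u" "D u x = 0" shows "\<exists>m. x = (m * fst u, m * snd u)"
proof -
  obtain a b where u: "u = (a,b)" by (cases u)
  obtain x1 x2 where x: "x = (x1,x2)" by (cases x)
  have "gcd a b = 1" using assms(1) u by (simp add: primitive_def)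
  then obtain s t where st: "s*a + t*b = 1" using bezout_int[of a b] by auto
  have e: "a*x2 = b*x1" using assms(2) u x by (simp add: D_def)
  have 1: "x1 = (s*x1 + t*x2) * a"
  proof -
    have "(s*x1 + t*x2) * a = s*a*x1 + t*(a*x2)" by (simp add: algebra_simps)
    also have "\<dots> = s*a*x1 + t*(b*x1)" using e by simp
    also have "\<dots> = x1*(s*a+t*b)" by (simp add: algebra_simps)
    finally show ?thesis using st by simp
  qed
  have 2: "x2 = (s*x1 + t*x2) * b"
  proof -
    have "(s*x1 + t*x2) * b = s*(b*x1) + t*b*x2" by (simp add: algebra_simps)
    also have "\<dots> = s*(a*x2) + t*b*x2" using e by simp
    also have "\<dots> = x2*(s*a+t*b)" by (simp add: algebra_simps)
    finally show ?thesis using st by simp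
  qed
  show ?thesis using 1 2 u x by auto
qed

lemma prim_of_D1: assumes "D u w = 1" shows "primitive w"
proof -
  have "gcd (fst w) (snd w) dvd D u w"
    unfolding D_def by (intro dvd_diff dvd_mult) auto
  then have "gcd (fst w) (snd w) dvd 1" using assms by simp
  then have "gcd (fst w) (snd w) = 1" by simp
  moreover have "w \<noteq> (0,0)" using assms by (auto simp: D_def)
  ultimately show ?thesis by (simp add: primitive_def)
qed

lemma angle_zero: assumes "primitive u" "primitive v" "ccw_angle u v = 0" shows "v = u"
proof -
  have u0: "u \<noteq> (0,0)" using assms(1) by (simp add: primitive_def)
  define z where "z = to_complex v / to_complex u"
  have "ccw_angle u v = (if Arg z < 0 then Arg z + 2*pi else Arg z)" by (simp add: ccw_angle_def z_def Let_def)
  then have "Arg z = 0" using assms(3) mpi_less_Arg[of z] by (auto split: if_splits)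
  then have r: "z \<in> \<real>" "0 \<le> Re z" using Arg_eq_0 by auto
  then have "Im z = 0" by (simp add: complex_is_Real_iff)
  then have d0: "D u v = 0" using Im_quot[of v u] sq_pos[OF u0] u0 by (cases u) (auto simp: z_def)
  obtain m where m: "v = (m * fst u, m * snd u)" using D_zero_mult[OF assms(1) d0] by auto
  have "0 \<le> real_of_int (fst u * fst v + snd u * snd v)"
    using r(2) Re_quot[of v u] sq_pos[OF u0] by (simp add: z_def zero_le_divide_iff)
  then have "0 \<le> fst u * fst v + snd u * snd v" by (simp only: of_int_0_le_iff)
  then have "0 \<le> m * (fst u * fst u + snd u * snd u)" using m by (simp add: algebra_simps)
  moreover have "0 < fst u * fst u + snd u * snd u" using u0
    by (cases u) (auto simp: sum_squares_gt_zero_iff)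
  ultimately have mge: "0 \<le> m" by (simp add: zero_le_mult_iff)
  have "gcd (fst v) (snd v) = \<bar>m\<bar> * gcd (fst u) (snd u)" using m by (simp add: gcd_mult_left abs_mult)
  then have "\<bar>m\<bar> = 1" using assms(1,2) by (simp add: primitive_def)
  then have "m = 1" using mge by simp
  then show ?thesis using m by simp
qed

lemma reduce: fixes p q x y c :: int
  assumes "p \<noteq> 0" "\<bar>q\<bar> \<le> \<bar>p\<bar>" "p*y - q*x = c" "\<bar>c\<bar> \<le> 1"
  shows "\<exists>x' y'. p*y' - q*x' = c \<and> \<bar>x'\<bar> \<le> \<bar>p\<bar> \<and> \<bar>y'\<bar> \<le> \<bar>p\<bar>"
proof -
  define x' where "x' = x mod p"
  define y' where "y' = y - (x div p) * q"
  have e: "p*y' - q*x' = c"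
  proof -
    have "p*y' - q*x' = p*y - q*((x div p) * p + x')" by (simp add: y'_def algebra_simps)
    also have "\<dots> = p*y - q*x" by (simp add: x'_def)
    finally show ?thesis using assms(3) by simp
  qed
  have xb: "\<bar>x'\<bar> < \<bar>p\<bar>" using assms(1) by (simp add: x'_def abs_mod_less)
  have "\<bar>p\<bar> * \<bar>y'\<bar> = \<bar>c + q*x'\<bar>" using e by (simp add: abs_mult[symmetric] algebra_simps)
  also have "\<dots> \<le> 1 + \<bar>q\<bar> * \<bar>x'\<bar>" using assms(4) by (simp add: abs_mult[symmetric] abs_triangle_ineq[THEN order_trans])
  also have "\<dots> \<le> 1 + \<bar>p\<bar> * (\<bar>p\<bar> - 1)" using xb assms(2) by (simp add: mult_mono)
  finally have h: "\<bar>p\<bar> * \<bar>y'\<bar> \<le> 1 + \<bar>p\<bar> * (\<bar>p\<bar> - 1)" .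
  have "\<bar>y'\<bar> \<le> \<bar>p\<bar>"
  proof (rule ccontr)
    assume "\<not> ?thesis"
    then have "\<bar>p\<bar> + 1 \<le> \<bar>y'\<bar>" by simp
    then have "\<bar>p\<bar> * (\<bar>p\<bar> + 1) \<le> \<bar>p\<bar> * \<bar>y'\<bar>" by (simp add: mult_left_mono)
    with h have "\<bar>p\<bar> * (\<bar>p\<bar> + 1) \<le> 1 + \<bar>p\<bar> * (\<bar>p\<bar> - 1)" by simp
    then have "2 * \<bar>p\<bar> \<le> 1" by (simp add: algebra_simps)
    with assms(1) show False by simp
  qed
  with e xb show ?thesis by (intro exI[of _ x'] exI[of _ y']) auto
qed

lemma stepA: assumes "primitive \<rho>" shows "\<exists>w. D \<rho> w = 1 \<and> maxnorm w \<le> maxnorm \<rho>"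
proof -
  obtain p q where r: "\<rho> = (p,q)" by (cases \<rho>)
  have g: "gcd p q = 1" "(p,q) \<noteq> (0,0)" using assms r by (auto simp: primitive_def)
  obtain s t where st: "s*p + t*q = 1" using bezout_int[of p q] g by auto
  show ?thesis
  proof (cases "\<bar>q\<bar> \<le> \<bar>p\<bar>")
    case True
    then have "p \<noteq> 0" using g by auto
    from reduce[OF this True, of s "-t" 1] st obtain x' y' where
      "p*y' - q*x' = 1" "\<bar>x'\<bar> \<le> \<bar>p\<bar>" "\<bar>y'\<bar> \<le> \<bar>p\<bar>" by (auto simp: algebra_simps)
    then show ?thesis using r by (intro exI[of _ "(x',y')"]) (auto simp: D_def maxnorm_def)
  next
    case False
    then have "q \<noteq> 0" "\<bar>p\<bar> \<le> \<bar>q\<bar>" by auto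
    from reduce[OF this, of "-t" s "-1"] st obtain x' y' where
      "q*y' - p*x' = -1" "\<bar>x'\<bar> \<le> \<bar>q\<bar>" "\<bar>y'\<bar> \<le> \<bar>q\<bar>" by (auto simp: algebra_simps)
    then show ?thesis using r by (intro exI[of _ "(y',x')"]) (auto simp: D_def maxnorm_def)
  qed
qed

lemma nbr_fwd:
  assumes "fan_neighbor True h \<rho> \<nu>" "w0 \<in> fan_rays h" "D \<rho> w0 > 0"
  shows "D \<rho> \<nu> > 0 \<and> (\<forall>w\<in>fan_rays h. \<not> (D \<rho> w > 0 \<and> D w \<nu> > 0))"
proof -
  have r: "primitive \<rho>" "primitive \<nu>" "\<nu> \<noteq> \<rho>" and
    no: "\<not> (\<exists>w \<in> fan_rays h. 0 < ccw_angle \<rho> w \<and> ccw_angle \<rho> w < ccw_angle \<rho> \<nu>)"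
    using assms(1) by (auto simp: fan_neighbor_def fan_rays_def side_angle_def)
  have u0: "\<rho> \<noteq> (0,0)" using r(1) by (simp add: primitive_def)
  have pos: "D \<rho> \<nu> > 0"
  proof (rule ccontr)
    assume "\<not> ?thesis"
    then have "\<not> (0 < ccw_angle \<rho> \<nu> \<and> ccw_angle \<rho> \<nu> < pi)" using L1[OF u0] by blast
    moreover have "ccw_angle \<rho> \<nu> \<noteq> 0" using angle_zero[OF r(1,2)] r(3) by blast
    ultimately have "pi \<le> ccw_angle \<rho> \<nu>" using ccw_angle_nonneg[of \<rho> \<nu>] by linarith
    moreover have "0 < ccw_angle \<rho> w0 \<and> ccw_angle \<rho> w0 < pi" using L1[OF u0] assms(3) by blast
    ultimately show False using no assms(2) by force
  qed
  moreover have "\<forall>w\<in>fan_rays h. \<not> (D \<rho> w > 0 \<and> D w \<nu> > 0)"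
  proof (intro ballI notI)
    fix w assume w: "w \<in> fan_rays h" "D \<rho> w > 0 \<and> D w \<nu> > 0"
    then have "ccw_angle \<rho> w < ccw_angle \<rho> \<nu>" using L4[OF u0] pos by blast
    moreover have "0 < ccw_angle \<rho> w" using L1[OF u0] w by blast
    ultimately show False using no w by blast
  qed
  ultimately show ?thesis by blast
qed

lemma maxnorm_le: "maxnorm (a,b) \<le> h \<longleftrightarrow> \<bar>a\<bar> \<le> h \<and> \<bar>b\<bar> \<le> h"
  by (simp add: maxnorm_def)

lemma smooth:
  assumes "primitive \<rho>" "primitive \<nu>" "maxnorm \<rho> \<le> h" "maxnorm \<nu> \<le> h" "D \<rho> \<nu> > 0"
    and no: "\<forall>w\<in>fan_rays h. \<not> (D \<rho> w > 0 \<and> D w \<nu> > 0)"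
  shows "D \<rho> \<nu> = 1"
proof (rule ccontr)
  assume ne: "D \<rho> \<nu> \<noteq> 1"
  obtain p q where r: "\<rho> = (p,q)" by (cases \<rho>)
  obtain n1 n2 where n: "\<nu> = (n1,n2)" by (cases \<nu>)
  define d where "d = D \<rho> \<nu>"
  have d2: "d \<ge> 2" using ne assms(5) by (simp add: d_def)
  have dd: "d = p*n2 - q*n1" using r n by (simp add: d_def D_def)
  obtain e1 e2 where e: "D \<rho> (e1,e2) = 1" using stepA[OF assms(1)] by (metis prod.collapse)
  have "D \<rho> (n1 - d*e1, n2 - d*e2) = 0" using e r dd by (simp add: D_def algebra_simps)
  then obtain m where m: "n1 - d*e1 = m*p" "n2 - d*e2 = m*q" using D_zero_mult[OF assms(1)] r by auto
  define c where "c = (-m) mod d"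
  define t where "t = (m + c) div d"
  have c: "0 \<le> c" "c \<le> d - 1" using d2 by (auto simp: c_def)
  have mt: "m + c = d * t"
  proof -
    have "(m + c) mod d = 0" unfolding c_def by (simp add: mod_add_right_eq)
    then show ?thesis using div_mult_mod_eq[of "m+c" d] unfolding t_def by (simp add: mult.commute)
  qed
  define z1 where "z1 = e1 + t*p"
  define z2 where "z2 = e2 + t*q"
  have dz1: "d*z1 = n1 + c*p"
  proof -
    have "d*z1 = d*e1 + (d*t)*p" by (simp add: z1_def algebra_simps)
    also have "\<dots> = d*e1 + (m+c)*p" using mt by simp
    also have "\<dots> = d*e1 + m*p + c*p" by (simp add: algebra_simps)
    also have "\<dots> = n1 + c*p" using m(1) by linarith
    finally show ?thesis .
  qed
  have dz2: "d*z2 = n2 + c*q"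
  proof -
    have "d*z2 = d*e2 + (d*t)*q" by (simp add: z2_def algebra_simps)
    also have "\<dots> = d*e2 + (m+c)*q" using mt by simp
    also have "\<dots> = d*e2 + m*q + c*q" by (simp add: algebra_simps)
    also have "\<dots> = n2 + c*q" using m(2) by linarith
    finally show ?thesis .
  qed
  have hp: "\<bar>p\<bar> \<le> h" "\<bar>q\<bar> \<le> h" "\<bar>n1\<bar> \<le> h" "\<bar>n2\<bar> \<le> h" using assms(3,4) r n by (auto simp: maxnorm_def)
  have bnd: "\<bar>z\<bar> \<le> h" if "d*z = n + c*a" "\<bar>n\<bar> \<le> h" "\<bar>a\<bar> \<le> h" for z n a
  proof -
    have "d * \<bar>z\<bar> = \<bar>d*z\<bar>" using d2 by (simp add: abs_mult)
    also have "\<dots> = \<bar>n + c*a\<bar>" using that(1) by simp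
    also have "\<dots> \<le> \<bar>n\<bar> + c*\<bar>a\<bar>" using c by (simp add: abs_mult abs_triangle_ineq[THEN order_trans])
    also have "\<dots> \<le> h + (d-1)*h" using c that(2,3) by (intro add_mono mult_mono) auto
    also have "\<dots> = d*h" by (simp add: algebra_simps)
    finally show ?thesis using d2 by simp
  qed
  have zb: "maxnorm (z1,z2) \<le> h" using bnd[OF dz1 hp(3,1)] bnd[OF dz2 hp(4,2)] by (simp add: maxnorm_def)
  have Dz: "D \<rho> (z1,z2) = 1" using e r by (simp add: D_def z1_def z2_def algebra_simps)
  have "d * D (z1,z2) \<nu> = d * c"
  proof -
    have "d * D (z1,z2) \<nu> = (d*z1)*n2 - (d*z2)*n1" using n by (simp add: D_def algebra_simps)
    also have "\<dots> = (n1 + c*p)*n2 - (n2 + c*q)*n1" by (simp only: dz1 dz2)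
    also have "\<dots> = c*(p*n2 - q*n1)" by (simp add: algebra_simps)
    also have "\<dots> = c * d" using dd by simp
    finally show ?thesis by simp
  qed
  then have Dzn: "D (z1,z2) \<nu> = c" using d2 by simp
  show False
  proof (cases "c = 0")
    case True
    then have "d dvd n1" "d dvd n2" using dz1 dz2 by (auto intro: dvdI[where k=z1] dvdI[where k=z2])
    then have g: "d dvd gcd n1 n2" by simp
    have "gcd n1 n2 = 1" using assms(2) n by (simp add: primitive_def)
    with g have "d dvd 1" by simp
    then show False using d2 by (simp add: zdvd_imp_le[of d 1])
  next
    case False
    then have "(z1,z2) \<in> fan_rays h" using zb prim_of_D1[OF Dz] by (simp add: fan_rays_def)
    then show False using no Dz Dzn False c by force
  qed
qed

lemma fan_rays_finite: "finite (fan_rays h)"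
proof -
  have "fan_rays h \<subseteq> {-h..h} \<times> {-h..h}" by (auto simp: fan_rays_def maxnorm_def)
  then show ?thesis by (rule finite_subset) auto
qed

lemma fan_rays_mono: "h0 \<le> h \<Longrightarrow> fan_rays h0 \<subseteq> fan_rays h"
  by (auto simp: fan_rays_def)

lemma exists_nbr: assumes "\<rho> \<in> fan_rays h" "\<gamma> \<in> fan_rays h" "D \<rho> \<gamma> > 0"
  shows "\<exists>\<nu>. fan_neighbor True h \<rho> \<nu>"
proof -
  define S where "S = {w \<in> fan_rays h. D \<rho> w > 0}"
  define f where "f = ccw_angle \<rho>"
  have fS: "finite S" using fan_rays_finite by (simp add: S_def)
  have gS: "\<gamma> \<in> S" using assms by (simp add: S_def)
  have "Min (f ` S) \<in> f ` S" using fS gS by (intro Min_in) auto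
  then obtain \<nu> where nu: "\<nu> \<in> S" "f \<nu> = Min (f ` S)" by auto
  have mn: "f \<nu> \<le> f w" if "w \<in> S" for w using nu(2) fS that by simp
  have u0: "\<rho> \<noteq> (0,0)" using assms(1) by (simp add: fan_rays_def primitive_def)
  have fpi: "f \<nu> < pi" using L1[OF u0, of \<nu>] nu(1) by (simp add: S_def f_def)
  have "fan_neighbor True h \<rho> \<nu>"
    unfolding fan_neighbor_def side_angle_def
  proof (intro conjI)
    show "\<rho> \<in> fan_rays h" "\<nu> \<in> fan_rays h" using assms nu by (auto simp: S_def)
    show "\<nu> \<noteq> \<rho>" using nu(1) by (auto simp: S_def D_def)
    show "\<not> (\<exists>w\<in>fan_rays h. 0 < (if True then ccw_angle \<rho> w else ccw_angle w \<rho>) \<and>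
        (if True then ccw_angle \<rho> w else ccw_angle w \<rho>) < (if True then ccw_angle \<rho> \<nu> else ccw_angle \<nu> \<rho>))"
    proof
      assume "\<exists>w\<in>fan_rays h. 0 < (if True then ccw_angle \<rho> w else ccw_angle w \<rho>) \<and>
        (if True then ccw_angle \<rho> w else ccw_angle w \<rho>) < (if True then ccw_angle \<rho> \<nu> else ccw_angle \<nu> \<rho>)"
      then obtain w where w: "w \<in> fan_rays h" "0 < f w" "f w < f \<nu>" by (auto simp: f_def)
      then have "D \<rho> w > 0" using L1[OF u0, of w] fpi by (simp add: f_def)
      then have "w \<in> S" using w by (simp add: S_def)
      then show False using mn[OF \<open>w \<in> S\<close>] w by linarith
    qed
  qed
  then show ?thesis by blast
qed

lemma main_ccw:
  fixes rho gamma :: "int \<times> int" and h0 h :: int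
  assumes "primitive rho"
    and "h0 = maxnorm rho"
    and "fan_neighbor True h0 rho gamma"
    and "h \<ge> h0"
  shows "\<forall>nu. primitive nu \<longrightarrow>
           (fan_neighbor True h rho nu \<longleftrightarrow>
             (\<exists>a::int. a \<ge> 0 \<and> nu = (fst gamma + a * fst rho, snd gamma + a * snd rho)
                \<and> maxnorm (fst gamma + a * fst rho, snd gamma + a * snd rho) \<le> h
                \<and> (\<forall>s::int. s > a \<longrightarrow> maxnorm (fst gamma + s * fst rho, snd gamma + s * snd rho) > h)))"
proof -
  define W where "W = (\<lambda>s::int. (fst gamma + s * fst rho, snd gamma + s * snd rho))"
  have rh0: "rho \<in> fan_rays h0" using assms(1,2) by (simp add: fan_rays_def)
  obtain w0 where w0: "D rho w0 = 1" "maxnorm w0 \<le> maxnorm rho" using stepA[OF assms(1)] by blast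
  have w0f: "w0 \<in> fan_rays h0" using w0 prim_of_D1[OF w0(1)] assms(2) by (simp add: fan_rays_def)
  have g1: "D rho gamma > 0" "\<forall>w\<in>fan_rays h0. \<not> (D rho w > 0 \<and> D w gamma > 0)"
    using nbr_fwd[OF assms(3) w0f] w0(1) by auto
  have gf: "gamma \<in> fan_rays h0" using assms(3) by (simp add: fan_neighbor_def)
  have Dg: "D rho gamma = 1"
    using smooth[OF assms(1) _ _ _ g1(1) g1(2)] gf assms(2) by (simp add: fan_rays_def)
  have gfh: "gamma \<in> fan_rays h" and rfh: "rho \<in> fan_rays h"
    using gf rh0 fan_rays_mono[OF assms(4)] by auto
  have DW: "D rho (W s) = 1" for s using Dg by (simp add: W_def D_def algebra_simps)
  have DWW: "D (W s) (W a) = s - a" for s a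
  proof -
    have "D (W s) (W a) = (s - a) * D rho gamma" by (simp add: W_def D_def algebra_simps)
    then show ?thesis using Dg by simp
  qed
  have fwd: "\<exists>a\<ge>0. nu = W a \<and> maxnorm (W a) \<le> h \<and> (\<forall>s>a. maxnorm (W s) > h)"
    if nb: "fan_neighbor True h rho nu" for nu
  proof -
    have n1: "D rho nu > 0" and no: "\<forall>w\<in>fan_rays h. \<not> (D rho w > 0 \<and> D w nu > 0)"
      using nbr_fwd[OF nb gfh g1(1)] by auto
    have nf: "nu \<in> fan_rays h" using nb by (simp add: fan_neighbor_def)
    have Dn: "D rho nu = 1"
      using smooth[OF assms(1) _ _ _ n1 no] nf rfh by (simp add: fan_rays_def)
    have "D rho (fst nu - fst gamma, snd nu - snd gamma) = 0" using Dn Dg by (simp add: D_def algebra_simps)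
    then obtain a where a: "fst nu - fst gamma = a * fst rho" "snd nu - snd gamma = a * snd rho"
      using D_zero_mult[OF assms(1)] by auto
    have nuW: "nu = W a" using a by (simp add: W_def prod_eq_iff algebra_simps)
    have a0: "a \<ge> 0"
    proof (rule ccontr)
      assume "\<not> a \<ge> 0"
      moreover have "W 0 = gamma" by (simp add: W_def)
      ultimately have "D gamma nu > 0" using DWW[of 0 a] nuW by simp
      then show False using no gfh g1(1) by blast
    qed
    have "maxnorm (W a) \<le> h" using nf nuW by (simp add: fan_rays_def)
    moreover have "maxnorm (W s) > h" if "s > a" for s
    proof (rule ccontr)
      assume "\<not> ?thesis"
      then have "W s \<in> fan_rays h" using prim_of_D1[OF DW[of s]] by (simp add: fan_rays_def)
      moreover have "D (W s) nu > 0" using DWW[of s a] nuW that by simp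
      ultimately show False using no DW[of s] by force
    qed
    ultimately show ?thesis using a0 nuW by blast
  qed
  obtain nus where nus: "fan_neighbor True h rho nus" using exists_nbr[OF rfh gfh g1(1)] by blast
  obtain as where as: "as \<ge> 0" "nus = W as" "maxnorm (W as) \<le> h" "\<forall>s>as. maxnorm (W s) > h"
    using fwd[OF nus] by blast
  show ?thesis
  proof (intro allI impI iffI)
    fix nu assume "primitive nu" "fan_neighbor True h rho nu"
    then show "\<exists>a::int. a \<ge> 0 \<and> nu = (fst gamma + a * fst rho, snd gamma + a * snd rho)
                \<and> maxnorm (fst gamma + a * fst rho, snd gamma + a * snd rho) \<le> h
                \<and> (\<forall>s::int. s > a \<longrightarrow> maxnorm (fst gamma + s * fst rho, snd gamma + s * snd rho) > h)"
      using fwd unfolding W_def by blast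
  next
    fix nu assume "primitive nu" and "\<exists>a::int. a \<ge> 0 \<and> nu = (fst gamma + a * fst rho, snd gamma + a * snd rho)
                \<and> maxnorm (fst gamma + a * fst rho, snd gamma + a * snd rho) \<le> h
                \<and> (\<forall>s::int. s > a \<longrightarrow> maxnorm (fst gamma + s * fst rho, snd gamma + s * snd rho) > h)"
    then obtain a where a: "nu = W a" "maxnorm (W a) \<le> h" "\<forall>s>a. maxnorm (W s) > h"
      unfolding W_def by blast
    have "a = as"
    proof (rule ccontr)
      assume "a \<noteq> as"
      then have "a < as \<or> as < a" by linarith
      then show False using a as by force
    qed
    then show "fan_neighbor True h rho nu" using nus as a by simp
  qed
qed

definition refl :: "lvec \<Rightarrow> lvec" where "refl v = (fst v, - snd v)"

lemma refl_refl[simp]: "refl (refl v) = v" by (simp add: refl_def)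

lemma angle_refl: "ccw_angle v u = ccw_angle (refl u) (refl v)"
proof -
  have tc: "to_complex (refl w) = cnj (to_complex w)" for w
    by (simp add: refl_def to_complex_def complex_eq_iff)
  have "Arg (to_complex u / to_complex v) = Arg (cnj (to_complex v / to_complex u))"
  proof (cases "to_complex v / to_complex u = 0")
    case True
    then have "to_complex u / to_complex v = 0" by auto
    with True show ?thesis by (cases "to_complex v = 0") auto
  next
    case False
    have "Arg (cnj (to_complex v / to_complex u)) = Arg (inverse (to_complex v / to_complex u))"
      using False by (rule Arg_cnj_eq_inverse)
    then show ?thesis by (simp add: inverse_divide)
  qed
  then show ?thesis by (simp add: ccw_angle_def tc Let_def)
qed

lemma maxnorm_refl[simp]: "maxnorm (refl v) = maxnorm v" by (simp add: refl_def maxnorm_def)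
lemma primitive_refl[simp]: "primitive (refl v) = primitive v" by (cases v) (auto simp: refl_def primitive_def)
lemma fan_rays_refl[simp]: "refl v \<in> fan_rays h \<longleftrightarrow> v \<in> fan_rays h" by (simp add: fan_rays_def)
lemma refl_inj[simp]: "refl a = refl b \<longleftrightarrow> a = b" by (metis refl_refl)

lemma nbr_refl: "fan_neighbor False h \<rho> \<nu> \<longleftrightarrow> fan_neighbor True h (refl \<rho>) (refl \<nu>)"
proof -
  have ex: "(\<exists>w\<in>fan_rays h. Q (refl w)) \<longleftrightarrow> (\<exists>w\<in>fan_rays h. Q w)" for Q
    by (metis fan_rays_refl refl_refl)
  show ?thesis unfolding fan_neighbor_def side_angle_def
    using ex[of "\<lambda>w. 0 < ccw_angle (refl \<rho>) w \<and> ccw_angle (refl \<rho>) w < ccw_angle (refl \<rho>) (refl \<nu>)"]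
    by (simp add: angle_refl[of _ \<rho>])
qed

theorem mainTheorem9:
  fixes ccw :: bool and rho gamma :: "int \<times> int" and h0 h :: int
  assumes "primitive rho"
    and "h0 = maxnorm rho"
    and "fan_neighbor ccw h0 rho gamma"
    and "h \<ge> h0"
  shows "\<forall>nu. primitive nu \<longrightarrow>
           (fan_neighbor ccw h rho nu \<longleftrightarrow>
             (\<exists>a::int. a \<ge> 0 \<and> nu = (fst gamma + a * fst rho, snd gamma + a * snd rho)
                \<and> maxnorm (fst gamma + a * fst rho, snd gamma + a * snd rho) \<le> h
                \<and> (\<forall>s::int. s > a \<longrightarrow> maxnorm (fst gamma + s * fst rho, snd gamma + s * snd rho) > h)))"
proof (cases ccw)
  case True
  then show ?thesis using main_ccw[OF assms(1,2) _ assms(4)] assms(3) by simp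
next
  case False
  have M: "\<forall>nu. primitive nu \<longrightarrow>
           (fan_neighbor True h (refl rho) nu \<longleftrightarrow>
             (\<exists>a::int. a \<ge> 0 \<and> nu = (fst (refl gamma) + a * fst (refl rho), snd (refl gamma) + a * snd (refl rho))
                \<and> maxnorm (fst (refl gamma) + a * fst (refl rho), snd (refl gamma) + a * snd (refl rho)) \<le> h
                \<and> (\<forall>s::int. s > a \<longrightarrow> maxnorm (fst (refl gamma) + s * fst (refl rho), snd (refl gamma) + s * snd (refl rho)) > h)))"
    using main_ccw[of "refl rho" h0 "refl gamma" h] assms False nbr_refl by simp
  have W: "(fst (refl gamma) + a * fst (refl rho), snd (refl gamma) + a * snd (refl rho))
     = refl (fst gamma + a * fst rho, snd gamma + a * snd rho)" for a
    by (simp add: refl_def algebra_simps)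
  show ?thesis
  proof (intro allI impI)
    fix nu assume p: "primitive nu"
    have "fan_neighbor ccw h rho nu \<longleftrightarrow> fan_neighbor True h (refl rho) (refl nu)"
      using False nbr_refl by simp
    also have "\<dots> \<longleftrightarrow> (\<exists>a::int. a \<ge> 0 \<and> refl nu = refl (fst gamma + a * fst rho, snd gamma + a * snd rho)
                \<and> maxnorm (refl (fst gamma + a * fst rho, snd gamma + a * snd rho)) \<le> h
                \<and> (\<forall>s::int. s > a \<longrightarrow> maxnorm (refl (fst gamma + s * fst rho, snd gamma + s * snd rho)) > h))"
      using M p by (simp only: W primitive_refl)
    also have "\<dots> \<longleftrightarrow> (\<exists>a::int. a \<ge> 0 \<and> nu = (fst gamma + a * fst rho, snd gamma + a * snd rho)
                \<and> maxnorm (fst gamma + a * fst rho, snd gamma + a * snd rho) \<le> h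
                \<and> (\<forall>s::int. s > a \<longrightarrow> maxnorm (fst gamma + s * fst rho, snd gamma + s * snd rho) > h))"
      by (simp only: refl_inj maxnorm_refl)
    finally show "fan_neighbor ccw h rho nu \<longleftrightarrow> (\<exists>a::int. a \<ge> 0 \<and> nu = (fst gamma + a * fst rho, snd gamma + a * snd rho)
                \<and> maxnorm (fst gamma + a * fst rho, snd gamma + a * snd rho) \<le> h
                \<and> (\<forall>s::int. s > a \<longrightarrow> maxnorm (fst gamma + s * fst rho, snd gamma + s * snd rho) > h))" .
  qed
qed

end
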